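(* For integers $1\le q\le p<n$ define $$K_n=\Big(\frac2n\Big)^{pq/2}\prod_{j=0}^{q-1}\frac{\Gamma((n-j)/2)}{\Gamma((n-p-j)/2)}.$$ If $p=p_n\to\infty$, $\limsup_{n\to\infty}p/n<1$ and $pq=O(n)$, then as $n\to\infty$ $$\log K_n=-\frac{pq}{2}+\frac{q(q+1)}{4}\log\Big(1+\frac{p}{n-p}\Big)-\frac{pq^3}{12n^2}-c_nq\log\Big(1-\frac pn\Big)+o(1),$$ where $c_n=\frac12(n-p-q-1)$. *)

theory Defs
  imports "HOL-Analysis.Analysis" "HOL-Library.Landau_Symbols"
begin

definition K_const :: "nat \<Rightarrow> nat \<Rightarrow> nat \<Rightarrow> real" where
  "K_const n p q = (2 / real n) powr (real p * real q / 2) *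
     (\<Prod>j<q. Gamma ((real n - real j) / 2) / Gamma ((real n - real p - real j) / 2))"

end

theory Submission
  imports Defs "HOL-Real_Asymp.Real_Asymp"
begin


lemma ln1m_bounds:
  fixes x :: real
  assumes "0 \<le> x" "x \<le> 1/2"
  shows "-(x^4/2) \<le> ln (1-x) + x + x^2/2 + x^3/3" and "ln (1-x) + x + x^2/2 + x^3/3 \<le> 0"
proof -
  let ?g = "\<lambda>t::real. ln (1-t) + t + t^2/2 + t^3/3 + t^4/2"
  have "?g 0 \<le> ?g x"
  proof (rule deriv_nonneg_imp_mono[where g = "?g" and g' = "\<lambda>t. -1/(1-t) + 1 + t + t^2 + 2*t^3"])
    fix t assume t: "t \<in> {0..x}"
    hence t1: "t < 1" using assms by auto
    show "(?g has_real_derivative (-1/(1-t) + 1 + t + t^2 + 2*t^3)) (at t)"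
      using t1 by - (rule derivative_eq_intros refl | simp)+
    have "(-1/(1-t) + 1 + t + t^2 + 2*t^3) = t^3*(1-2*t)/(1-t)"
      using t1 by (simp add: field_simps power2_eq_square power3_eq_cube; simp add: algebra_simps)
    also have "\<dots> \<ge> 0" using t assms t1 by (intro divide_nonneg_pos mult_nonneg_nonneg) auto
    finally show "0 \<le> -1/(1-t) + 1 + t + t^2 + 2*t^3" .
  qed (use assms in auto)
  thus "-(x^4/2) \<le> ln (1-x) + x + x^2/2 + x^3/3" by simp
  let ?k = "\<lambda>t::real. - (ln (1-t) + t + t^2/2 + t^3/3)"
  have "?k 0 \<le> ?k x"
  proof (rule deriv_nonneg_imp_mono[where g = "?k" and g' = "\<lambda>t. 1/(1-t) - 1 - t - t^2"])
    fix t assume t: "t \<in> {0..x}"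
    hence t1: "t < 1" using assms by auto
    show "(?k has_real_derivative (1/(1-t) - 1 - t - t^2)) (at t)"
      using t1 by - (rule derivative_eq_intros refl | simp)+
    have "1/(1-t) - 1 - t - t^2 = t^3/(1-t)"
      using t1 by (simp add: field_simps power2_eq_square power3_eq_cube; simp add: algebra_simps)
    also have "\<dots> \<ge> 0" using t assms t1 by (intro divide_nonneg_pos) auto
    finally show "0 \<le> 1/(1-t) - 1 - t - t^2" .
  qed (use assms in auto)
  thus "ln (1-x) + x + x^2/2 + x^3/3 \<le> 0" by simp
qed

lemma ln1p_bounds:
  fixes u :: real
  assumes "0 \<le> u"
  shows "u - u^2/2 \<le> ln (1+u)" and "ln (1+u) \<le> u - u^2/2 + u^3/3"
proof -
  let ?g = "\<lambda>t::real. ln (1+t) - t + t^2/2"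
  have "?g 0 \<le> ?g u"
  proof (rule deriv_nonneg_imp_mono[where g = "?g" and g' = "\<lambda>t. 1/(1+t) - 1 + t"])
    fix t assume t: "t \<in> {0..u}"
    show "(?g has_real_derivative (1/(1+t) - 1 + t)) (at t)"
      using t by - (rule derivative_eq_intros refl | simp)+
    have "1/(1+t) - 1 + t = t^2/(1+t)"
      using t by (simp add: field_simps power2_eq_square)
    also have "\<dots> \<ge> 0" using t by (intro divide_nonneg_pos) auto
    finally show "0 \<le> 1/(1+t) - 1 + t" .
  qed (use assms in auto)
  thus "u - u^2/2 \<le> ln (1+u)" by simp
  let ?k = "\<lambda>t::real. t - t^2/2 + t^3/3 - ln (1+t)"
  have "?k 0 \<le> ?k u"
  proof (rule deriv_nonneg_imp_mono[where g = "?k" and g' = "\<lambda>t. 1 - t + t^2 - 1/(1+t)"])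
    fix t assume t: "t \<in> {0..u}"
    show "(?k has_real_derivative (1 - t + t^2 - 1/(1+t))) (at t)"
      using t by - (rule derivative_eq_intros refl | simp)+
    have "1 - t + t^2 - 1/(1+t) = t^3/(1+t)"
      using t by (simp add: field_simps power2_eq_square power3_eq_cube; simp add: algebra_simps)
    also have "\<dots> \<ge> 0" using t by (intro divide_nonneg_pos) auto
    finally show "0 \<le> 1 - t + t^2 - 1/(1+t)" .
  qed (use assms in auto)
  thus "ln (1+u) \<le> u - u^2/2 + u^3/3" by simp
qed


definition phi :: "real \<Rightarrow> real" where
  "phi x = ln (Gamma x) - (x - 1/2) * ln x + x"

lemma phi_step:
  assumes "x > 0"
  shows "phi x - phi (x+1) = (x + 1/2) * ln (1 + 1/x) - 1"
proof -
  have nz: "x \<notin> \<int>\<^sub>\<le>\<^sub>0" using assms by (auto elim!: nonpos_Ints_cases)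
  have G: "Gamma (x+1) = x * Gamma x" using Gamma_plus1[OF nz] .
  have Gp: "Gamma x > 0" using assms by simp
  have h1: "ln (Gamma (x+1)) = ln x + ln (Gamma x)" unfolding G using assms Gp by (intro ln_mult_pos) auto
  have h2: "ln (1 + 1/x) = ln (x+1) - ln x"
  proof -
    have "1 + 1/x = (x+1)/x" using assms by (simp add: field_simps)
    thus ?thesis using assms by (simp add: ln_divide_pos)
  qed
  have "phi x - phi (x+1) = (x + 1/2) * (ln (x+1) - ln x) - 1"
    unfolding phi_def h1 by (simp add: algebra_simps)
  thus ?thesis unfolding h2 .
qed

lemma phi_step_bound:
  assumes "x \<ge> 1"
  shows "\<bar>phi x - phi (x+1)\<bar> \<le> 1 / x^2"
proof -
  have u: "1/x \<ge> 0" using assms by simp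
  have lo: "1/x - (1/x)^2/2 \<le> ln (1 + 1/x)" by (rule ln1p_bounds(1)[OF u])
  have hi: "ln (1 + 1/x) \<le> 1/x - (1/x)^2/2 + (1/x)^3/3" by (rule ln1p_bounds(2)[OF u])
  have xp: "x + 1/2 > 0" using assms by simp
  have "(x + 1/2) * (1/x - (1/x)^2/2) \<le> (x + 1/2) * ln (1 + 1/x)"
    using lo xp by (intro mult_left_mono) auto
  moreover have "(x + 1/2) * ln (1 + 1/x) \<le> (x + 1/2) * (1/x - (1/x)^2/2 + (1/x)^3/3)"
    using hi xp by (intro mult_left_mono) auto
  moreover have "(x + 1/2) * (1/x - (1/x)^2/2) = 1 - 1/(4*x^2)"
    using assms by (simp add: field_simps power2_eq_square)
  moreover have "(x + 1/2) * (1/x - (1/x)^2/2 + (1/x)^3/3) = 1 + 1/(12*x^2) + 1/(6*x^3)"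
    using assms by (simp add: field_simps power2_eq_square power3_eq_cube)
  moreover have "1/(6*x^3) \<le> 1/(6*x^2)"
    using assms by (simp add: field_simps power2_eq_square power3_eq_cube)
  moreover have "1/(4*x^2) \<le> 1/x^2" "1/(12*x^2) + 1/(6*x^2) \<le> 1/x^2"
    using assms by (simp_all add: field_simps)
  ultimately show ?thesis using phi_step[of x] assms by (simp add: abs_le_iff)
qed

lemma phi_tele:
  assumes "x \<ge> 1"
  shows "\<bar>phi x - phi (x + real k)\<bar> \<le> 2/x - 2/(x + real k)"
proof (induction k)
  case 0 then show ?case by simp
next
  case (Suc k)
  let ?y = "x + real k"
  have y1: "?y \<ge> 1" using assms by simp
  have "\<bar>phi ?y - phi (?y+1)\<bar> \<le> 1/?y^2" by (rule phi_step_bound[OF y1])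
  also have "1/?y^2 = 2/(2*?y^2)" by simp
  also have "\<dots> \<le> 2/(?y*(?y+1))"
    using y1 by (intro divide_left_mono) (auto simp: power2_eq_square)
  also have "\<dots> = 2/?y - 2/(?y+1)"
    using y1 by (simp add: field_simps)
  finally have st: "\<bar>phi ?y - phi (?y+1)\<bar> \<le> 2/?y - 2/(?y+1)" .
  have eq: "x + real (Suc k) = ?y + 1" by simp
  show ?case unfolding eq using Suc.IH st by linarith
qed

lemma phi_shift_lim:
  assumes "y > 0"
  shows "(\<lambda>k. phi (y + real k) - phi (real k)) \<longlonglongrightarrow> 0"
proof -
  have nz: "y \<notin> \<int>\<^sub>\<le>\<^sub>0" using assms by (auto elim!: nonpos_Ints_cases)
  have Gy: "Gamma y > 0" using assms by simp
  have "(\<lambda>k. Gamma_series y k / Gamma y) \<longlonglongrightarrow> Gamma y / Gamma y"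
    by (intro tendsto_intros) (use Gy in auto)
  hence "(\<lambda>k. Gamma_series y k / Gamma y) \<longlonglongrightarrow> 1" using Gy by simp
  hence "(\<lambda>k. ln (Gamma_series y k / Gamma y)) \<longlonglongrightarrow> ln 1"
    by (intro tendsto_ln) auto
  hence L1: "(\<lambda>k. ln (Gamma_series y k / Gamma y)) \<longlonglongrightarrow> 0" by simp
  have eqv: "ln (Gamma_series y k / Gamma y) =
      ln (Gamma (real k + 1)) + y * ln (real k) - ln (Gamma (y + real k + 1))" if k: "k \<ge> 1" for k
  proof -
    have poch: "pochhammer y (k+1) = Gamma (y + real (k+1)) / Gamma y"
      using pochhammer_Gamma[OF nz] by simp
    have fk: "fact k = Gamma (real k + 1)" using Gamma_fact[of k, where 'a=real] by (simp add: add.commute)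
    have pos1: "Gamma (real k + 1) > 0" by simp
    have pos2: "Gamma (y + real k + 1) > 0" using assms by simp
    have "Gamma_series y k / Gamma y = Gamma (real k + 1) * exp (y * ln (real k)) / Gamma (y + real k + 1)"
      unfolding Gamma_series_def poch fk using Gy by (simp add: field_simps add_ac)
    also have "ln \<dots> = ln (Gamma (real k + 1)) + y * ln (real k) - ln (Gamma (y + real k + 1))"
    proof -
      have e: "exp (y * ln (real k)) > 0" by simp
      have "ln (Gamma (real k + 1) * exp (y * ln (real k)) / Gamma (y + real k + 1))
          = ln (Gamma (real k + 1) * exp (y * ln (real k))) - ln (Gamma (y + real k + 1))"
        using pos1 pos2 e by (intro ln_divide_pos) auto
      also have "ln (Gamma (real k + 1) * exp (y * ln (real k))) = ln (Gamma (real k + 1)) + ln (exp (y * ln (real k)))"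
        using pos1 e by (intro ln_mult_pos) auto
      finally show ?thesis by simp
    qed
    finally show ?thesis .
  qed
  have W: "(\<lambda>k::nat. y * ln (real k) - (y + real k + 1/2) * ln (y + real k + 1)
      + (real k + 1/2) * ln (real k + 1) + y) \<longlonglongrightarrow> 0"
    using assms by real_asymp
  have "(\<lambda>k. (y * ln (real k) - (y + real k + 1/2) * ln (y + real k + 1)
      + (real k + 1/2) * ln (real k + 1) + y) - ln (Gamma_series y k / Gamma y)) \<longlonglongrightarrow> 0 - 0"
    by (intro tendsto_diff W L1)
  hence lim0: "(\<lambda>k. (y * ln (real k) - (y + real k + 1/2) * ln (y + real k + 1)
      + (real k + 1/2) * ln (real k + 1) + y) - ln (Gamma_series y k / Gamma y)) \<longlonglongrightarrow> 0" by simp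
  have "(\<lambda>k. phi (y + real (Suc k)) - phi (real (Suc k))) \<longlonglongrightarrow> 0"
  proof (rule Lim_transform_eventually[OF lim0])
    show "\<forall>\<^sub>F k in sequentially. (y * ln (real k) - (y + real k + 1/2) * ln (y + real k + 1)
      + (real k + 1/2) * ln (real k + 1) + y) - ln (Gamma_series y k / Gamma y)
       = phi (y + real (Suc k)) - phi (real (Suc k))"
      using eventually_ge_at_top[of "1::nat"]
    proof eventually_elim
      case (elim k)
      show ?case unfolding eqv[OF elim] phi_def by (simp add: algebra_simps)
    qed
  qed
  thus ?thesis by (subst filterlim_sequentially_Suc[symmetric])
qed

lemma phi_diff_bound:
  assumes "a \<ge> 1" "b \<ge> 1"
  shows "\<bar>phi a - phi b\<bar> \<le> 2/a + 2/b"
proof -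
  have "(\<lambda>k. (phi (a + real k) - phi (real k)) - (phi (b + real k) - phi (real k))) \<longlonglongrightarrow> 0 - 0"
    using assms by (intro tendsto_diff phi_shift_lim) auto
  hence "(\<lambda>k. phi (a + real k) - phi (b + real k)) \<longlonglongrightarrow> 0" by simp
  hence "(\<lambda>k. \<bar>phi (a + real k) - phi (b + real k)\<bar>) \<longlonglongrightarrow> \<bar>0\<bar>" by (intro tendsto_rabs)
  hence T: "(\<lambda>k. 2/a + 2/b + \<bar>phi (a + real k) - phi (b + real k)\<bar>) \<longlonglongrightarrow> 2/a + 2/b + 0"
    by (intro tendsto_add tendsto_const) auto
  show ?thesis
  proof (rule LIMSEQ_le_const[OF T[simplified]], intro exI allI impI)
    fix k :: nat
    have A: "\<bar>phi a - phi (a + real k)\<bar> \<le> 2/a" using phi_tele[OF assms(1), of k] assms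
      by (smt (verit) divide_nonneg_nonneg of_nat_0_le_iff)
    have B: "\<bar>phi b - phi (b + real k)\<bar> \<le> 2/b" using phi_tele[OF assms(2), of k] assms
      by (smt (verit) divide_nonneg_nonneg of_nat_0_le_iff)
    show "\<bar>phi a - phi b\<bar> \<le> 2/a + 2/b + \<bar>phi (a + real k) - phi (b + real k)\<bar>"
      using A B by linarith
  qed
qed



definition hfun :: "real \<Rightarrow> real \<Rightarrow> real" where
  "hfun N j = ((N - j - 1)/2) * ln (1 - j/N)"
definition Pfun :: "real \<Rightarrow> real \<Rightarrow> real" where
  "Pfun N j = -j/2 + (j^2+2*j)/(4*N) + (j^3+3*j^2)/(12*N^2) + (j^4+j^3)/(6*N^3)"

lemma hfun_approx:
  assumes N: "N > 0" and j: "0 \<le> j" "2*j \<le> N" "j + 1 \<le> N"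
  shows "\<bar>hfun N j - Pfun N j\<bar> \<le> j^4/(4*N^3)"
proof -
  define x where "x = j/N"
  have x0: "0 \<le> x" "x \<le> 1/2" using N j by (auto simp: x_def field_simps)
  define r where "r = ln (1-x) + x + x^2/2 + x^3/3"
  have r1: "-(x^4/2) \<le> r" "r \<le> 0" unfolding r_def using ln1m_bounds[OF x0] by auto
  have eq: "hfun N j = Pfun N j + ((N - j - 1)/2) * r"
  proof -
    have L: "ln (1 - j/N) = r - x - x^2/2 - x^3/3" unfolding r_def x_def by simp
    have "hfun N j = ((N - j - 1)/2) * (- x - x^2/2 - x^3/3) + ((N - j - 1)/2) * r"
      unfolding hfun_def L by (simp add: field_simps)
    also have "((N - j - 1)/2) * (- x - x^2/2 - x^3/3) = Pfun N j"
      unfolding Pfun_def x_def using N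
      by (simp add: field_simps power2_eq_square power3_eq_cube power4_eq_xxxx)
    finally show ?thesis .
  qed
  have c0: "0 \<le> (N - j - 1)/2" "(N - j - 1)/2 \<le> N/2" using j by auto
  have "\<bar>((N - j - 1)/2) * r\<bar> = ((N - j - 1)/2) * (-r)" using c0 r1 by (simp add: abs_mult abs_of_nonpos)
  also have "\<dots> \<le> (N/2) * (x^4/2)"
    using c0 r1 by (intro mult_mono) auto
  also have "(N/2) * (x^4/2) = j^4/(4*N^3)"
    unfolding x_def using N by (simp add: field_simps power4_eq_xxxx power3_eq_cube)
  finally show ?thesis using eq by simp
qed



lemma sum_real_id: "(\<Sum>j<q. real j) = real q * (real q - 1) / 2"
  by (induction q) (auto simp: field_simps)

lemma sum_S12: "(\<Sum>j<q. (real j)^2 + 2 * real j) = (real q)^3/3 + (real q)^2/2 - 5 * real q/6"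
  by (induction q) (auto simp: field_simps power2_eq_square power3_eq_cube)

lemma sum_lin: "(\<Sum>j<q. (M - real j - 1)/2) = real q*(M-1)/2 - real q*(real q - 1)/4"
  by (induction q) (auto simp: field_simps)

lemma decomp:
  fixes n p q :: nat
  assumes q1: "1 \<le> q" and qp: "q \<le> p" and pqn: "p + q < n"
  defines "F \<equiv> - real p * real q / 2
                + real q * (real q + 1) / 4 * ln (1 + real p / (real n - real p))
                - real p * real q ^ 3 / (12 * real n ^ 2)
                - (real n - real p - real q - 1) / 2 * real q * ln (1 - real p / real n)"
  shows "ln (K_const n p q) - F =
     (\<Sum>j<q. phi ((real n - real j)/2) - phi ((real n - real p - real j)/2))
     + (\<Sum>j<q. hfun (real n) (real j) - hfun (real n - real p) (real j))
     + real p * real q ^ 3 / (12 * real n ^ 2)"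
proof -
  define N where "N = real n"
  define P where "P = real p"
  define Q where "Q = real q"
  define M where "M = N - P"
  define Lt where "Lt = ln (M/N)"
  define Ln where "Ln = ln (N/2)"
  have N0: "N > 0" and M0: "M > 0" and MQ: "M > Q" using pqn by (auto simp: N_def M_def P_def Q_def)
  have apos: "(N - real j)/2 > 0" and bpos: "(N - P - real j)/2 > 0" if "j < q" for j
    using that pqn by (auto simp: N_def P_def)
  have Apos: "(2 / real n) powr (real p * real q / 2) > 0" using pqn by simp
  have Bpos: "(\<Prod>j<q. Gamma ((real n - real j) / 2) / Gamma ((real n - real p - real j) / 2)) > 0"
    using apos bpos by (intro prod_pos) (auto simp: N_def P_def)
  have lnK: "ln (K_const n p q) = (P * Q / 2) * ln (2/N) +
      (\<Sum>j<q. ln (Gamma ((N - real j) / 2)) - ln (Gamma ((N - P - real j) / 2)))"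
  proof -
    have "ln (K_const n p q) = ln ((2 / real n) powr (real p * real q / 2)) +
        ln (\<Prod>j<q. Gamma ((real n - real j) / 2) / Gamma ((real n - real p - real j) / 2))"
      unfolding K_const_def using Apos Bpos by (rule ln_mult_pos)
    also have "ln ((2 / real n) powr (real p * real q / 2)) = (P * Q / 2) * ln (2/N)"
      using pqn by (simp add: ln_powr N_def P_def Q_def)
    also have "ln (\<Prod>j<q. Gamma ((real n - real j) / 2) / Gamma ((real n - real p - real j) / 2))
        = (\<Sum>j<q. ln (Gamma ((real n - real j) / 2) / Gamma ((real n - real p - real j) / 2)))"
    proof (rule ln_prod)
      fix j assume "j \<in> {..<q}"
      hence "(real n - real j) / 2 > 0" "(real n - real p - real j) / 2 > 0"
        using apos bpos by (auto simp: N_def P_def)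
      hence "Gamma ((real n - real j) / 2) / Gamma ((real n - real p - real j) / 2) > 0"
        by (metis divide_pos_pos Gamma_real_pos)
      thus "Gamma ((real n - real j) / 2) / Gamma ((real n - real p - real j) / 2) \<noteq> 0" by linarith
    qed simp
    also have "\<dots> = (\<Sum>j<q. ln (Gamma ((N - real j) / 2)) - ln (Gamma ((N - P - real j) / 2)))"
    proof (rule sum.cong[OF refl])
      fix j assume "j \<in> {..<q}"
      hence "(real n - real j) / 2 > 0" "(real n - real p - real j) / 2 > 0"
        using apos bpos by (auto simp: N_def P_def)
      hence "Gamma ((real n - real j) / 2) > 0" "Gamma ((real n - real p - real j) / 2) > 0"
        by (metis Gamma_real_pos)+
      thus "ln (Gamma ((real n - real j) / 2) / Gamma ((real n - real p - real j) / 2)) =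
         ln (Gamma ((N - real j) / 2)) - ln (Gamma ((N - P - real j) / 2))"
        unfolding N_def P_def by (rule ln_divide_pos)
    qed
    finally show ?thesis .
  qed
  have termj: "ln (Gamma ((N - real j) / 2)) - ln (Gamma ((N - P - real j) / 2)) + (P/2) * ln (2/N)
      = phi ((N - real j)/2) - phi ((N - P - real j)/2) + hfun N (real j) - hfun M (real j)
        - ((M - real j - 1)/2) * Lt - P/2" if j: "j < q" for j
  proof -
    have e1: "ln ((N - real j)/2) = Ln + ln (1 - real j / N)"
    proof -
      have eq: "(N - real j)/2 = (N/2) * (1 - real j / N)" using N0 by (simp add: field_simps)
      have p1: "1 - real j / N > 0" using apos[OF j] N0 by (simp add: field_simps)
      have "ln ((N - real j)/2) = ln ((N/2) * (1 - real j / N))" by (subst eq) (rule refl)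
      also have "\<dots> = ln (N/2) + ln (1 - real j / N)" using N0 p1 by (intro ln_mult_pos) auto
      finally show ?thesis unfolding Ln_def .
    qed
    have e2: "ln ((N - P - real j)/2) = Ln + Lt + ln (1 - real j / M)"
    proof -
      have eq: "(N - P - real j)/2 = (N/2) * ((M/N) * (1 - real j / M))" using N0 M0 by (simp add: field_simps M_def)
      have p1: "1 - real j / M > 0" using j MQ M0 by (simp add: field_simps Q_def)
      have "ln ((N - P - real j)/2) = ln ((N/2) * ((M/N) * (1 - real j / M)))" by (subst eq) (rule refl)
      also have "\<dots> = ln (N/2) + ln ((M/N) * (1 - real j / M))" using N0 M0 p1
        by (intro ln_mult_pos) auto
      also have "ln ((M/N) * (1 - real j / M)) = ln (M/N) + ln (1 - real j / M)" using N0 M0 p1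
        by (intro ln_mult_pos) auto
      finally have ?thesis unfolding Ln_def Lt_def by simp
      thus ?thesis .
    qed
    have e3: "ln (2/N) = - Ln" unfolding Ln_def using N0 by (simp add: ln_div)
    show ?thesis unfolding phi_def hfun_def e1 e2 e3 by (simp add: M_def field_simps)
  qed
  have sumM: "(\<Sum>j<q. (M - real j - 1)/2) = Q * (M - 1)/2 - Q * (Q - 1)/4"
    unfolding Q_def by (rule sum_lin)
  have l1: "ln (1 + real p / (real n - real p)) = - Lt"
  proof -
    have "1 + real p / (real n - real p) = N / M" using M0 by (simp add: N_def M_def P_def field_simps)
    thus ?thesis unfolding Lt_def using N0 M0 by (simp add: ln_div)
  qed
  have l2: "ln (1 - real p / real n) = Lt"
  proof -
    have "1 - real p / real n = M / N" using N0 by (simp add: N_def M_def P_def field_simps)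
    thus ?thesis unfolding Lt_def by simp
  qed
  have "ln (K_const n p q) = (\<Sum>j<q. ln (Gamma ((N - real j) / 2)) - ln (Gamma ((N - P - real j) / 2)) + (P/2) * ln (2/N))"
    unfolding lnK by (simp add: sum.distrib Q_def)
  also have "\<dots> = (\<Sum>j<q. (phi ((N - real j)/2) - phi ((N - P - real j)/2)) + (hfun N (real j) - hfun M (real j))
        - (((M - real j - 1)/2) * Lt + P/2))"
  proof (rule sum.cong[OF refl])
    fix j assume "j \<in> {..<q}"
    hence "j < q" by simp
    from termj[OF this] show "ln (Gamma ((N - real j) / 2)) - ln (Gamma ((N - P - real j) / 2)) + (P/2) * ln (2/N) =
        (phi ((N - real j)/2) - phi ((N - P - real j)/2)) + (hfun N (real j) - hfun M (real j))
        - (((M - real j - 1)/2) * Lt + P/2)" by (simp add: algebra_simps)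
  qed
  also have "\<dots> = (\<Sum>j<q. phi ((N - real j)/2) - phi ((N - P - real j)/2)) + (\<Sum>j<q. hfun N (real j) - hfun M (real j))
        - (Lt * (\<Sum>j<q. (M - real j - 1)/2) + P * Q/2)"
    by (simp add: sum.distrib sum_subtractf sum_distrib_left Q_def mult.commute)
  finally have "ln (K_const n p q) = (\<Sum>j<q. phi ((N - real j)/2) - phi ((N - P - real j)/2)) + (\<Sum>j<q. hfun N (real j) - hfun M (real j))
        - (Lt * (Q * (M - 1)/2 - Q * (Q - 1)/4) + P * Q/2)" unfolding sumM .
  moreover have "F = - P * Q / 2 - Q * (Q + 1) / 4 * Lt - P * Q ^ 3 / (12 * N ^ 2) - (M - Q - 1) / 2 * Q * Lt"
    unfolding F_def l1 l2 by (simp add: N_def P_def Q_def M_def)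
  ultimately show ?thesis unfolding N_def P_def Q_def M_def by (simp add: field_simps)
qed



lemma Pdiff_eq:
  assumes "N > 0" "M > 0"
  shows "Pfun N j - Pfun M j = (j^2+2*j)/4 * (1/N - 1/M) + (j^3+3*j^2)/12 * (1/N^2 - 1/M^2)
           + (j^4+j^3)/6 * (1/N^3 - 1/M^3)"
  unfolding Pfun_def using assms by (simp add: field_simps)

lemma absb: "0 \<le> (a::real) \<Longrightarrow> a \<le> x \<Longrightarrow> \<bar>b\<bar> \<le> y \<Longrightarrow> \<bar>-a - b\<bar> \<le> x + y"
  by linarith

lemma T1_bound:
  fixes N M P Q D :: real
  assumes Q1: "1 \<le> Q" and QP: "Q \<le> P" and M0: "0 < M" and PQ: "P*Q \<le> D*M" and D0: "0 \<le> D"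
    and NMP: "N = M + P"
  shows "\<bar>(Q^3/3 + Q^2/2 - 5*Q/6)/4 * (1/N - 1/M) + P*Q^3/(12*N^2)\<bar> \<le> (D^2 + D) * Q / M"
proof -
  have N0: "N > 0" using NMP M0 QP Q1 by linarith
  have MN: "M \<le> N" using NMP QP Q1 by linarith
  have eq: "(Q^3/3 + Q^2/2 - 5*Q/6)/4 * (1/N - 1/M) + P*Q^3/(12*N^2)
      = -((P*Q)^2*Q/(12*N^2*M)) - P*Q*(Q/2 - 5/6)/(4*N*M)"
  proof -
    have Pe: "P = N - M" using NMP by simp
    show ?thesis unfolding Pe using M0 N0
      by (simp add: field_simps power2_eq_square power3_eq_cube; simp add: algebra_simps)
  qed
  have a1: "(P*Q)^2*Q/(12*N^2*M) \<le> D^2 * Q / M"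
  proof -
    have pq0: "0 \<le> P*Q" using Q1 QP by simp
    have "(P*Q)^2 \<le> (D*M)^2" using pq0 PQ by (intro power_mono) auto
    also have "(D*M)^2 \<le> D^2 * N^2" using MN M0 D0 by (simp add: power_mult_distrib mult_left_mono power_mono)
    finally have "(P*Q)^2 \<le> D^2 * N^2" .
    hence "(P*Q)^2*Q \<le> D^2 * N^2 * Q" using Q1 by (intro mult_right_mono) auto
    hence "(P*Q)^2*Q/(12*N^2*M) \<le> D^2 * N^2 * Q/(12*N^2*M)"
      using N0 M0 by (intro divide_right_mono) auto
    also have "\<dots> = D^2 * Q / (12 * M)" using N0 by (simp add: field_simps power2_eq_square)
    also have "\<dots> \<le> D^2 * Q / M" using M0 Q1 D0 by (simp add: field_simps)
    finally show ?thesis .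
  qed
  have a2: "\<bar>P*Q*(Q/2 - 5/6)/(4*N*M)\<bar> \<le> D * Q / M"
  proof -
    have qq: "\<bar>Q/2 - 5/6\<bar> \<le> Q" using Q1 by simp
    have pq0: "0 \<le> P*Q" using Q1 QP by simp
    have X: "\<bar>P*Q*(Q/2 - 5/6)\<bar> \<le> (D*M) * Q"
    proof -
      have "\<bar>P*Q*(Q/2 - 5/6)\<bar> = (P*Q) * \<bar>Q/2 - 5/6\<bar>"
        using Q1 QP by (simp add: abs_mult)
      also have "\<dots> \<le> (D*M) * Q" by (rule mult_mono[OF PQ qq]) (use M0 D0 in auto)
      finally show ?thesis .
    qed
    have "\<bar>P*Q*(Q/2 - 5/6)/(4*N*M)\<bar> = \<bar>P*Q*(Q/2 - 5/6)\<bar>/(4*N*M)"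
      using N0 M0 by (simp add: abs_divide)
    also have "\<dots> \<le> (D*M) * Q/(4*N*M)"
      using N0 M0 X by (intro divide_right_mono) auto
    also have "\<dots> = D*Q/(4*N)" using M0 by (simp add: field_simps)
    also have "\<dots> \<le> D*Q/M" using M0 N0 MN D0 Q1
      by (intro frac_le) (auto intro: mult_nonneg_nonneg)
    finally show ?thesis .
  qed
  have a0: "0 \<le> (P*Q)^2*Q/(12*N^2*M)" using Q1 M0 by simp
  have r: "(D^2 + D) * Q / M = D^2 * Q / M + D * Q / M" by (simp add: add_divide_distrib distrib_right)
  show ?thesis unfolding eq r by (rule absb[OF a0 a1 a2])
qed


lemma sum_abs_bound:
  fixes f :: "nat \<Rightarrow> real"
  assumes "\<And>j. j < q \<Longrightarrow> \<bar>f j\<bar> \<le> B"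
  shows "\<bar>\<Sum>j<q. f j\<bar> \<le> real q * B"
proof -
  have "\<bar>\<Sum>j<q. f j\<bar> \<le> (\<Sum>j<q. \<bar>f j\<bar>)" by (rule sum_abs)
  also have "\<dots> \<le> (\<Sum>j<q. B)" using assms by (intro sum_mono) auto
  finally show ?thesis by simp
qed

lemma pow_bounds:
  fixes j Q :: real
  assumes "0 \<le> j" "j \<le> Q" "1 \<le> Q"
  shows "0 \<le> j^3 + 3*j^2" "j^3 + 3*j^2 \<le> 4*Q^3" "0 \<le> j^4 + j^3" "j^4 + j^3 \<le> 2*Q^4"
proof -
  have a: "j^2 \<le> Q^2" "j^3 \<le> Q^3" "j^4 \<le> Q^4" using assms by (auto intro: power_mono)
  have b: "Q^2 \<le> Q^3" "Q^3 \<le> Q^4" using assms by (auto intro: power_increasing)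
  show "0 \<le> j^3 + 3*j^2" "0 \<le> j^4 + j^3" using assms by auto
  show "j^3 + 3*j^2 \<le> 4*Q^3" "j^4 + j^3 \<le> 2*Q^4" using a b by linarith+
qed

lemma Psum_bound:
  fixes P M N D :: real and q :: nat
  assumes Q1: "1 \<le> real q" and QP: "real q \<le> P" and M0: "0 < M" and PQ: "P * real q \<le> D*M" and D0: "0 \<le> D"
    and NMP: "N = M + P"
  shows "\<bar>(\<Sum>j<q. Pfun N (real j) - Pfun M (real j)) + P * real q^3/(12*N^2)\<bar>
          \<le> (D^2 + D) * real q / M + D * real q^3 / M^2 + real q^5 / (3*M^3)"
proof -
  define Q where "Q = real q"
  have N0: "N > 0" using NMP M0 QP Q1 by linarith
  have MN: "M \<le> N" using NMP QP Q1 by linarith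
  define c1 where "c1 = 1/N - 1/M"
  define c2 where "c2 = 1/N^2 - 1/M^2"
  define c3 where "c3 = 1/N^3 - 1/M^3"
  have split: "(\<Sum>j<q. Pfun N (real j) - Pfun M (real j))
     = (\<Sum>j<q. (real j^2+2*real j)) / 4 * c1 + (\<Sum>j<q. (real j^3+3*real j^2)/12 * c2)
       + (\<Sum>j<q. (real j^4+real j^3)/6 * c3)"
  proof -
    have "(\<Sum>j<q. Pfun N (real j) - Pfun M (real j)) = (\<Sum>j<q. (real j^2+2*real j)/4 * c1
        + (real j^3+3*real j^2)/12 * c2 + (real j^4+real j^3)/6 * c3)"
      unfolding Pdiff_eq[OF N0 M0] c1_def c2_def c3_def by simp
    also have "\<dots> = (\<Sum>j<q. (real j^2+2*real j)/4 * c1) + (\<Sum>j<q. (real j^3+3*real j^2)/12 * c2)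
       + (\<Sum>j<q. (real j^4+real j^3)/6 * c3)" by (simp only: sum.distrib)
    also have "(\<Sum>j<q. (real j^2+2*real j)/4 * c1) = (\<Sum>j<q. (real j^2+2*real j)) / 4 * c1"
      by (simp only: sum_divide_distrib sum_distrib_right)
    finally show ?thesis .
  qed
  have T1: "\<bar>(\<Sum>j<q. (real j^2+2*real j)) / 4 * c1 + P * Q^3/(12*N^2)\<bar> \<le> (D^2 + D) * Q / M"
    unfolding sum_S12 c1_def Q_def using T1_bound[OF Q1 QP M0 PQ D0 NMP] by simp
  have c2b: "\<bar>c2\<bar> \<le> 2*P/(N*M^2)"
  proof -
    have Pe: "P = N - M" using NMP by simp
    have "c2 = -(P*(N+M)/(N^2*M^2))" unfolding c2_def Pe using M0 N0
      by (simp add: field_simps power2_eq_square; simp add: algebra_simps)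
    hence "\<bar>c2\<bar> = P*(N+M)/(N^2*M^2)" using QP Q1 M0 N0 by simp
    also have "\<dots> \<le> P*(2*N)/(N^2*M^2)" using QP Q1 M0 N0 MN
      by (intro divide_right_mono mult_left_mono) auto
    also have "\<dots> = 2*P/(N*M^2)" using N0 by (simp add: field_simps power2_eq_square)
    finally show ?thesis .
  qed
  have c3b: "\<bar>c3\<bar> \<le> 1/M^3"
  proof -
    have "1/N^3 \<le> 1/M^3" using M0 MN by (intro divide_left_mono power_mono mult_pos_pos) auto
    thus ?thesis unfolding c3_def using N0 by (simp add: abs_le_iff)
  qed
  have T2: "\<bar>\<Sum>j<q. (real j^3+3*real j^2)/12 * c2\<bar> \<le> D * Q^3 / M^2"
  proof -
    have "\<bar>\<Sum>j<q. (real j^3+3*real j^2)/12 * c2\<bar> \<le> real q * ((4*Q^3)/12 * (2*P/(N*M^2)))"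
    proof (rule sum_abs_bound)
      fix j assume j: "j < q"
      have pb: "0 \<le> real j^3 + 3*real j^2" "real j^3 + 3*real j^2 \<le> 4*Q^3"
        using pow_bounds[of "real j" Q] j Q1 unfolding Q_def by auto
      have "\<bar>(real j^3+3*real j^2)/12 * c2\<bar> = (real j^3+3*real j^2)/12 * \<bar>c2\<bar>"
        using pb by (simp add: abs_mult)
      also have "\<dots> \<le> (4*Q^3)/12 * (2*P/(N*M^2))"
        using pb c2b Q1 unfolding Q_def by (intro mult_mono) auto
      finally show "\<bar>(real j^3+3*real j^2)/12 * c2\<bar> \<le> (4*Q^3)/12 * (2*P/(N*M^2))" .
    qed
    also have "real q * ((4*Q^3)/12 * (2*P/(N*M^2))) = (2/3) * (P*Q) * Q^3 / (N*M^2)"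
      unfolding Q_def by (simp add: field_simps power3_eq_cube)
    also have "\<dots> \<le> (2/3) * (D*M) * Q^3 / (N*M^2)"
      using PQ N0 M0 Q1 unfolding Q_def by (intro divide_right_mono mult_right_mono mult_left_mono) auto
    also have "\<dots> = (2/3) * D * Q^3 / (N*M)" using M0 by (simp add: field_simps power2_eq_square)
    also have "\<dots> \<le> D * Q^3 / (M*M)"
      using N0 M0 MN D0 Q1 unfolding Q_def by (intro frac_le) (auto intro!: mult_mono)
    finally show ?thesis by (simp add: power2_eq_square)
  qed
  have T3: "\<bar>\<Sum>j<q. (real j^4+real j^3)/6 * c3\<bar> \<le> Q^5 / (3*M^3)"
  proof -
    have "\<bar>\<Sum>j<q. (real j^4+real j^3)/6 * c3\<bar> \<le> real q * ((2*Q^4)/6 * (1/M^3))"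
    proof (rule sum_abs_bound)
      fix j assume j: "j < q"
      have pb: "0 \<le> real j^4 + real j^3" "real j^4 + real j^3 \<le> 2*Q^4"
        using pow_bounds[of "real j" Q] j Q1 unfolding Q_def by auto
      have "\<bar>(real j^4+real j^3)/6 * c3\<bar> = (real j^4+real j^3)/6 * \<bar>c3\<bar>"
        using pb by (simp add: abs_mult)
      also have "\<dots> \<le> (2*Q^4)/6 * (1/M^3)"
        using pb c3b Q1 unfolding Q_def by (intro mult_mono) auto
      finally show "\<bar>(real j^4+real j^3)/6 * c3\<bar> \<le> (2*Q^4)/6 * (1/M^3)" .
    qed
    also have "real q * ((2*Q^4)/6 * (1/M^3)) = Q^5 / (3*M^3)"
      unfolding Q_def by (simp add: field_simps power3_eq_cube power4_eq_xxxx)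
         (simp add: power_def)
    finally show ?thesis .
  qed
  have "\<bar>(\<Sum>j<q. Pfun N (real j) - Pfun M (real j)) + P * Q^3/(12*N^2)\<bar>
      \<le> \<bar>(\<Sum>j<q. (real j^2+2*real j)) / 4 * c1 + P * Q^3/(12*N^2)\<bar>
        + \<bar>\<Sum>j<q. (real j^3+3*real j^2)/12 * c2\<bar> + \<bar>\<Sum>j<q. (real j^4+real j^3)/6 * c3\<bar>"
    unfolding split by linarith
  also have "\<dots> \<le> (D^2 + D) * Q / M + D * Q^3 / M^2 + Q^5 / (3*M^3)"
    using T1 T2 T3 by linarith
  finally show ?thesis unfolding Q_def .
qed


lemma main_bound:
  fixes n p q :: nat and D :: real
  assumes q1: "1 \<le> q" and qp: "q \<le> p" and pn: "p < n"
    and M4: "4 \<le> real n - real p" and QM: "2 * real q \<le> real n - real p"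
    and PQ: "real p * real q \<le> D * (real n - real p)" and D0: "0 \<le> D"
  shows "\<bar>ln (K_const n p q) - (- real p * real q / 2
                + real q * (real q + 1) / 4 * ln (1 + real p / (real n - real p))
                - real p * real q ^ 3 / (12 * real n ^ 2)
                - (real n - real p - real q - 1) / 2 * real q * ln (1 - real p / real n))\<bar>
         \<le> (16 + D^2 + D) * real q / (real n - real p) + D * real q^3 / (real n - real p)^2
            + real q^5 / (real n - real p)^3"
proof -
  define M where "M = real n - real p"
  define Q where "Q = real q"
  have M0: "M > 0" using M4 M_def by simp
  have Q1: "1 \<le> Q" using q1 Q_def by simp
  have pqn: "p + q < n" using QM q1 pn by linarith
  have nM: "M \<le> real n" using M_def by simp
  note dec = decomp[OF q1 qp pqn]
  have Phi: "\<bar>\<Sum>j<q. phi ((real n - real j)/2) - phi ((real n - real p - real j)/2)\<bar> \<le> real q * (16/M)"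
  proof (rule sum_abs_bound)
    fix j assume j: "j < q"
    have jQ: "real j \<le> Q" using j Q_def by simp
    have b4: "(real n - real p - real j)/2 \<ge> M/4" using jQ QM unfolding M_def Q_def by simp
    have b1: "(real n - real p - real j)/2 \<ge> 1" using b4 M4 M_def by simp
    have ab: "(real n - real j)/2 \<ge> (real n - real p - real j)/2" by simp
    have "\<bar>phi ((real n - real j)/2) - phi ((real n - real p - real j)/2)\<bar>
        \<le> 2/((real n - real j)/2) + 2/((real n - real p - real j)/2)"
      using b1 ab by (intro phi_diff_bound) auto
    also have "2/((real n - real j)/2) \<le> 2/((real n - real p - real j)/2)"
      using b1 ab by (intro divide_left_mono) auto
    also have "2/((real n - real p - real j)/2) \<le> 2/(M/4)"
      using b4 M0 by (intro divide_left_mono) auto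
    finally show "\<bar>phi ((real n - real j)/2) - phi ((real n - real p - real j)/2)\<bar> \<le> 16/M"
      by simp
  qed
  have Err: "\<bar>\<Sum>j<q. (hfun (real n) (real j) - Pfun (real n) (real j))
               - (hfun M (real j) - Pfun M (real j))\<bar> \<le> real q * (Q^4/(2*M^3))"
  proof (rule sum_abs_bound)
    fix j assume j: "j < q"
    have jQ: "real j \<le> Q" "real j + 1 \<le> Q" using j Q_def by auto
    have j4: "real j^4 \<le> Q^4" using jQ by (intro power_mono) auto
    have jM: "2 * real j \<le> M" "real j + 1 \<le> M" using jQ QM Q1 unfolding M_def Q_def by auto
    have e1: "\<bar>hfun (real n) (real j) - Pfun (real n) (real j)\<bar> \<le> real j^4/(4*real n^3)"
      using jM nM M0 by (intro hfun_approx) auto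
    have e2: "\<bar>hfun M (real j) - Pfun M (real j)\<bar> \<le> real j^4/(4*M^3)"
      using jM M0 by (intro hfun_approx) auto
    have "real j^4/(4*real n^3) \<le> Q^4/(4*M^3)"
      using j4 M0 nM by (intro frac_le) (auto intro: power_mono)
    moreover have "real j^4/(4*M^3) \<le> Q^4/(4*M^3)"
      using j4 M0 by (intro divide_right_mono) auto
    moreover have "Q^4/(4*M^3) + Q^4/(4*M^3) = Q^4/(2*M^3)" by simp
    ultimately show "\<bar>(hfun (real n) (real j) - Pfun (real n) (real j)) - (hfun M (real j) - Pfun M (real j))\<bar>
        \<le> Q^4/(2*M^3)" using e1 e2 by linarith
  qed
  have Ps: "\<bar>(\<Sum>j<q. Pfun (real n) (real j) - Pfun M (real j)) + real p * real q^3/(12*real n^2)\<bar>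
          \<le> (D^2 + D) * real q / M + D * real q^3 / M^2 + real q^5 / (3*M^3)"
    using Psum_bound[of q "real p" M D "real n"] Q1 qp M0 PQ D0 unfolding M_def Q_def by simp
  have hsplit: "(\<Sum>j<q. hfun (real n) (real j) - hfun M (real j))
     = (\<Sum>j<q. Pfun (real n) (real j) - Pfun M (real j))
       + (\<Sum>j<q. (hfun (real n) (real j) - Pfun (real n) (real j)) - (hfun M (real j) - Pfun M (real j)))"
    by (simp add: sum.distrib[symmetric] algebra_simps)
  have e5: "real q * (Q^4/(2*M^3)) = Q^5/(2*M^3)" unfolding Q_def by (simp add: power_def)
  have e6: "real q * (16/M) = 16 * Q / M" unfolding Q_def by simp
  have "\<bar>ln (K_const n p q) - (- real p * real q / 2
                + real q * (real q + 1) / 4 * ln (1 + real p / (real n - real p))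
                - real p * real q ^ 3 / (12 * real n ^ 2)
                - (real n - real p - real q - 1) / 2 * real q * ln (1 - real p / real n))\<bar>
       \<le> 16 * Q / M + ((D^2 + D) * Q / M + D * Q^3 / M^2 + Q^5 / (3*M^3)) + Q^5/(2*M^3)"
  proof -
    have key: "ln (K_const n p q) - (- real p * real q / 2
                + real q * (real q + 1) / 4 * ln (1 + real p / (real n - real p))
                - real p * real q ^ 3 / (12 * real n ^ 2)
                - (real n - real p - real q - 1) / 2 * real q * ln (1 - real p / real n))
       = (\<Sum>j<q. phi ((real n - real j)/2) - phi ((real n - real p - real j)/2))
         + ((\<Sum>j<q. Pfun (real n) (real j) - Pfun M (real j)) + real p * real q^3/(12*real n^2))
         + (\<Sum>j<q. (hfun (real n) (real j) - Pfun (real n) (real j)) - (hfun M (real j) - Pfun M (real j)))"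
      using dec hsplit unfolding M_def by linarith
    show ?thesis unfolding key using Phi Err Ps e5 e6 unfolding Q_def by linarith
  qed
  also have "\<dots> \<le> (16 + D^2 + D) * Q / M + D * Q^3 / M^2 + Q^5 / M^3"
  proof -
    have a: "Q^5/(3*M^3) + Q^5/(2*M^3) = (5/6) * (Q^5/M^3)" by (simp add: field_simps)
    have b: "0 \<le> Q^5/M^3" using M0 Q1 by simp
    have c: "(16 + D^2 + D) * Q / M = 16 * Q / M + (D^2 + D) * Q / M"
      by (simp add: add_divide_distrib distrib_right)
    show ?thesis using a b c by linarith
  qed
  finally show ?thesis unfolding M_def Q_def .
qed



lemma Q_bounds:
  fixes Q M D :: real
  assumes "0 \<le> Q" "0 < M" "Q^2 \<le> D * M" "0 \<le> D"
  shows "(16 + D^2 + D) * Q / M + D * Q^3 / M^2 + Q^5 / M^3 \<le> (16 + 3*D^2 + D) * sqrt (D / M)"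
proof -
  define s where "s = sqrt (D / M)"
  have s0: "0 \<le> s" using assms unfolding s_def by simp
  have r: "Q/M \<le> s"
  proof -
    have "(Q/M)^2 = Q^2/M^2" by (simp add: power_divide)
    also have "\<dots> \<le> (D*M)/M^2" using assms by (intro divide_right_mono) auto
    also have "\<dots> = D/M" using assms by (simp add: power2_eq_square)
    finally have "(Q/M)^2 \<le> D/M" .
    hence "sqrt ((Q/M)^2) \<le> sqrt (D/M)" by (rule real_sqrt_le_mono)
    thus ?thesis using assms unfolding s_def by simp
  qed
  have qm: "Q^2/M \<le> D" using assms by (simp add: field_simps)
  have qm0: "0 \<le> Q^2/M" using assms by simp
  have e3: "Q^3/M^2 = (Q/M) * (Q^2/M)" using assms by (simp add: field_simps power2_eq_square power3_eq_cube)
  have e5: "Q^5/M^3 = (Q/M) * (Q^2/M)^2" using assms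
    by (simp add: field_simps power2_eq_square power3_eq_cube) (simp add: power_def)
  have b3: "Q^3/M^2 \<le> s * D" unfolding e3 using r qm qm0 s0 assms by (intro mult_mono) auto
  have b5: "Q^5/M^3 \<le> s * D^2" unfolding e5 using r qm qm0 s0 assms
    by (intro mult_mono power_mono) auto
  have "(16 + D^2 + D) * Q / M = (16 + D^2 + D) * (Q / M)" by simp
  also have "\<dots> \<le> (16 + D^2 + D) * s" using r assms by (intro mult_left_mono) auto
  finally have b1: "(16 + D^2 + D) * Q / M \<le> (16 + D^2 + D) * s" .
  have b3': "D * Q^3 / M^2 \<le> D * (s * D)"
  proof -
    have "D * Q^3 / M^2 = D * (Q^3 / M^2)" by simp
    also have "\<dots> \<le> D * (s * D)" using b3 assms by (intro mult_left_mono) auto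
    finally show ?thesis .
  qed
  have "(16 + D^2 + D) * Q / M + D * Q^3 / M^2 + Q^5 / M^3 \<le> (16 + D^2 + D) * s + D * (s * D) + s * D^2"
    using b1 b3' b5 by linarith
  also have "\<dots> = (16 + 3*D^2 + D) * s" by (simp add: algebra_simps power2_eq_square)
  finally show ?thesis unfolding s_def .
qed

lemma sqrt_lim: "d > 0 \<Longrightarrow> D \<ge> 0 \<Longrightarrow> ((\<lambda>n::nat. K * sqrt (D / (d * real n))) \<longlongrightarrow> 0) at_top"
proof -
  assume d: "d > 0" and D: "D \<ge> 0"
  have "((\<lambda>n::nat. D / (d * real n)) \<longlongrightarrow> 0) at_top"
    by (intro tendsto_divide_0[OF tendsto_const] filterlim_at_top_imp_at_infinity
        filterlim_tendsto_pos_mult_at_top[OF tendsto_const d] filterlim_real_sequentially)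
  hence "((\<lambda>n::nat. sqrt (D / (d * real n))) \<longlongrightarrow> sqrt 0) at_top" by (rule tendsto_real_sqrt)
  hence "((\<lambda>n::nat. K * sqrt (D / (d * real n))) \<longlongrightarrow> K * 0) at_top" by (intro tendsto_mult tendsto_const) simp
  thus ?thesis by simp
qed


lemma pointwise:
  fixes n pn qn :: nat and C r d D K :: real
  assumes e1: "1 \<le> qn \<and> qn \<le> pn \<and> pn < n"
    and e2: "norm (real pn * real qn) \<le> C * norm (real n)"
    and e3: "real pn / real n < r"
    and e4: "nat \<lceil>(4 + 4*D)/d\<rceil> + 1 \<le> n"
    and d_def: "d = 1 - r" and d0: "d > 0" and D_def: "D = C / d" and D0: "D > 0"
    and K_def: "K = 16 + 3*D^2 + D"
  shows "\<bar>ln (K_const n pn qn)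
            - ( - real pn * real qn / 2
                + real qn * (real qn + 1) / 4 * ln (1 + real pn / (real n - real pn))
                - real pn * real qn ^ 3 / (12 * real n ^ 2)
                - (real n - real pn - real qn - 1) / 2 * real qn * ln (1 - real pn / real n))\<bar>
         \<le> K * sqrt (D / (d * real n))"
proof -
  note elim = e1 e2 e3 e4
  define P where "P = real pn"
  define Q where "Q = real qn"
  define N where "N = real n"
  define M where "M = N - P"
  have q1: "1 \<le> qn" and qp: "qn \<le> pn" and pn: "pn < n" using elim by auto
  have N0: "N > 0" using pn N_def by simp
  have Q1: "1 \<le> Q" using q1 Q_def by simp
  have QP: "Q \<le> P" using qp Q_def P_def by simp
  have Nbig: "N \<ge> (4 + 4*D)/d"
  proof -
    have a: "(4 + 4*D)/d \<le> real (nat \<lceil>(4 + 4*D)/d\<rceil>)" by (rule real_nat_ceiling_ge)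
    have "nat \<lceil>(4 + 4*D)/d\<rceil> \<le> n" using elim(4) by linarith
    hence "real (nat \<lceil>(4 + 4*D)/d\<rceil>) \<le> N" unfolding N_def by (rule of_nat_mono)
    thus ?thesis using a by linarith
  qed
  have PN: "P < r * N" using elim(3) N0 unfolding P_def N_def by (simp add: field_simps)
  have dN: "d * N = N - r * N" unfolding d_def by (simp add: algebra_simps)
  have MdN: "M \<ge> d * N" using PN dN unfolding M_def by linarith
  have dN0: "d * N > 0" using d0 N0 by (rule mult_pos_pos)
  have M0: "M > 0" using MdN dN0 by linarith
  have Mbig: "M \<ge> 4 + 4*D"
  proof -
    have "(4 + 4*D) \<le> N * d" using Nbig d0 by (simp only: pos_divide_le_eq)
    hence "4 + 4*D \<le> d * N" by (simp only: mult.commute)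
    thus ?thesis using MdN by linarith
  qed
  have PQ: "P * Q \<le> D * M"
  proof -
    have n1: "norm (real pn * real qn) = P * Q" unfolding P_def Q_def by (simp only: real_norm_def abs_mult abs_of_nat)
    have n2: "norm (real n) = N" unfolding N_def by (simp only: real_norm_def abs_of_nat)
    have "P * Q \<le> C * N" using elim(2) unfolding n1 n2 .
    also have "C * N = D * (d * N)" using d0 unfolding D_def by (simp add: field_simps)
    also have "\<dots> \<le> D * M" using MdN D0 by (intro mult_left_mono) auto
    finally show ?thesis .
  qed
  have Q2: "Q^2 \<le> D * M"
  proof -
    have "Q^2 \<le> P * Q" using QP Q1 by (simp add: power2_eq_square mult_right_mono)
    thus ?thesis using PQ by linarith
  qed
  have QM: "2 * Q \<le> M"
  proof -
    have "D * M \<le> (M/4) * M" using Mbig M0 by (intro mult_right_mono) linarith+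
    moreover have "(M/2)^2 = (M/4) * M" by (simp add: power2_eq_square)
    ultimately have q2: "Q^2 \<le> (M/2)^2" using Q2 by linarith
    have "Q \<le> M/2" by (rule power2_le_imp_le[OF q2]) (use M0 in simp)
    thus ?thesis by simp
  qed
  have mb: "\<bar>ln (K_const n pn qn)
      - ( - real pn * real qn / 2
        + real qn * (real qn + 1) / 4 * ln (1 + real pn / (real n - real pn))
        - real pn * real qn ^ 3 / (12 * real n ^ 2)
        - (real n - real pn - real qn - 1) / 2 * real qn * ln (1 - real pn / real n))\<bar>
     \<le> (16 + D^2 + D) * Q / M + D * Q^3 / M^2 + Q^5 / M^3"
  proof -
    have h4: "4 \<le> real n - real pn" using Mbig D0 unfolding M_def N_def P_def by linarith
    have h2: "2 * real qn \<le> real n - real pn" using QM unfolding M_def N_def P_def Q_def .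
    have h3: "real pn * real qn \<le> D * (real n - real pn)" using PQ unfolding M_def N_def P_def Q_def .
    show ?thesis using main_bound[OF q1 qp pn h4 h2 h3 D0[THEN less_imp_le]]
    unfolding M_def N_def P_def Q_def .
  qed
  also have "\<dots> \<le> K * sqrt (D / M)"
    unfolding K_def using Q1 M0 Q2 D0 by (intro Q_bounds) auto
  also have "\<dots> \<le> K * sqrt (D / (d * N))"
  proof -
    have "D / M \<le> D / (d * N)" using MdN D0 M0 dN0 by (intro divide_left_mono) auto
    hence "sqrt (D / M) \<le> sqrt (D / (d * N))" by (rule real_sqrt_le_mono)
    moreover have "K \<ge> 0" unfolding K_def using D0 by simp
    ultimately show ?thesis by (intro mult_left_mono)
  qed
  finally show ?thesis unfolding N_def .
qed


theorem lemma2p7: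
  fixes p q :: "nat \<Rightarrow> nat"
  assumes range: "eventually (\<lambda>n. 1 \<le> q n \<and> q n \<le> p n \<and> p n < n) sequentially"
    and p_inf: "filterlim p at_top sequentially"
    and limsup: "limsup (\<lambda>n. ereal (real (p n) / real n)) < 1"
    and pq_O: "(\<lambda>n. real (p n) * real (q n)) \<in> O(\<lambda>n. real n)"
  shows "(\<lambda>n. ln (K_const n (p n) (q n))
            - ( - real (p n) * real (q n) / 2
                + real (q n) * (real (q n) + 1) / 4 * ln (1 + real (p n) / (real n - real (p n)))
                - real (p n) * real (q n) ^ 3 / (12 * real n ^ 2)
                - (real n - real (p n) - real (q n) - 1) / 2 * real (q n) * ln (1 - real (p n) / real n)))
         \<longlonglongrightarrow> 0"
proof -
  obtain C where C0: "C > 0" and Cev: "eventually (\<lambda>n. norm (real (p n) * real (q n)) \<le> C * norm (real n)) sequentially"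
    using landau_o.bigE[OF pq_O] by blast
  obtain c :: ereal where c1: "limsup (\<lambda>n. ereal (real (p n) / real n)) < c" and c2: "c < 1"
    using limsup dense by blast
  have cev: "eventually (\<lambda>n. ereal (real (p n) / real n) < c) sequentially"
    using Limsup_lessD[OF c1] .
  obtain r where r1: "r < 1" and rev: "eventually (\<lambda>n. real (p n) / real n < r) sequentially"
  proof (cases c)
    case (real r)
    then show ?thesis using that c2 cev by auto
  next
    case PInf then show ?thesis using c2 by simp
  next
    case MInf
    hence "eventually (\<lambda>n. False) sequentially" using cev by simp
    then show ?thesis by simp
  qed
  define d where "d = 1 - r"
  have d0: "d > 0" using r1 d_def by simp
  define D where "D = C / d"
  have D0: "D > 0" using C0 d0 D_def by simp
  define K where "K = 16 + 3*D^2 + D"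
  have ev: "eventually (\<lambda>n. \<bar>ln (K_const n (p n) (q n))
            - ( - real (p n) * real (q n) / 2
                + real (q n) * (real (q n) + 1) / 4 * ln (1 + real (p n) / (real n - real (p n)))
                - real (p n) * real (q n) ^ 3 / (12 * real n ^ 2)
                - (real n - real (p n) - real (q n) - 1) / 2 * real (q n) * ln (1 - real (p n) / real n))\<bar>
         \<le> K * sqrt (D / (d * real n))) sequentially"
    using range Cev rev eventually_ge_at_top[of "nat \<lceil>(4 + 4*D)/d\<rceil> + 1"]
  proof eventually_elim
    case (elim n)
    show ?case by (rule pointwise[OF elim d_def d0 D_def D0 K_def])
  qed
  have lim: "((\<lambda>n::nat. K * sqrt (D / (d * real n))) \<longlongrightarrow> 0) at_top"
    by (rule sqrt_lim[OF d0 D0[THEN less_imp_le]])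
  show ?thesis
    by (rule Lim_null_comparison[OF _ lim]) (use ev in simp)
qed

end
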